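(* Let $R=\mathbb{Z}[x_1,\dots,x_n]$ or $R=\mathbb{Z}[[x_1,\dots,x_n]]$, and fix $i\in\{1,\dots,n\}$. For every $f\in R$ and every positive integer $m$, \[\sum_{\ell=0}^{m}(\ell-1)\,D_{\ell,i}(f)\,D_{m-\ell,i}(f^{m-1})=0 .\] The same identity holds with $\mathbb{Z}$ replaced by any field $k$ of characteristic $p>0$ (with the operators reduced mod $p$).
   Context: For $m\ge 0$, $D_{m,i}:R\to R$ is the map that is linear over $\mathbb{Z}[x_1,\dots,x_{i-1},x_{i+1},\dots,x_n]$ (resp. over $\mathbb{Z}[[x_1,\dots,x_{i-1},x_{i+1},\dots,x_n]]$, and compatible with infinite sums in the power series case) and sends $x_i^{\ell}$ to $\binom{\ell}{m}x_i^{\ell-m}$ (which is $0$ when $\ell<m$); $D_{0,i}$ is the identity. Formally $D_{m,i}=\frac{1}{m!}\frac{\partial^m}{\partial x_i^m}$. Over a field $k$ of characteristic $p$, $D_{m,i}$ is defined by the same formula on $k[x_1,\dots,x_n]$ or $k[[x_1,\dots,x_n]]$. *)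

theory Defs
  imports Main
begin

text \<open>Formal power series in finitely many variables (the variables are the elements
  of a finite type 'v, so n = CARD('v)), with coefficients in 'a: a series is its
  coefficient function on exponent vectors 'v => nat.  Polynomials are the series
  with finite support.\<close>

type_synonym ('v, 'a) mps = "('v \<Rightarrow> nat) \<Rightarrow> 'a"

definition mps_mult :: "('v::finite, 'a::comm_semiring_1) mps \<Rightarrow> ('v, 'a) mps \<Rightarrow> ('v, 'a) mps" where
  "mps_mult f g = (\<lambda>\<alpha>. \<Sum>\<beta>\<in>{\<beta>. \<beta> \<le> \<alpha>}. f \<beta> * g (\<lambda>v. \<alpha> v - \<beta> v))"

definition mps_one :: "('v, 'a::comm_semiring_1) mps" where
  "mps_one = (\<lambda>\<alpha>. if \<alpha> = (\<lambda>_. 0) then 1 else 0)"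

primrec mps_pow :: "('v::finite, 'a::comm_semiring_1) mps \<Rightarrow> nat \<Rightarrow> ('v, 'a) mps" where
  "mps_pow f 0 = mps_one"
| "mps_pow f (Suc k) = mps_mult f (mps_pow f k)"

definition is_poly :: "('v, 'a::zero) mps \<Rightarrow> bool" where
  "is_poly f \<longleftrightarrow> finite {\<alpha>. f \<alpha> \<noteq> 0}"

text \<open>Hasse derivative D_{m,i}: sends x_i^l to (l choose m) x_i^(l-m), linear over the other
  variables and compatible with infinite sums.\<close>

definition hasse :: "nat \<Rightarrow> 'v \<Rightarrow> ('v, 'a::comm_semiring_1) mps \<Rightarrow> ('v, 'a) mps" where
  "hasse m i f = (\<lambda>\<alpha>. of_nat ((\<alpha> i + m) choose m) * f (\<alpha>(i := \<alpha> i + m)))"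

definition hasse_sum :: "'v \<Rightarrow> nat \<Rightarrow> ('v::finite, 'a::comm_ring_1) mps \<Rightarrow> ('v, 'a) mps" where
  "hasse_sum i m f = (\<lambda>\<alpha>. \<Sum>l = 0..m. of_int (int l - 1) *
      mps_mult (hasse l i f) (hasse (m - l) i (mps_pow f (m - 1))) \<alpha>)"

end

theory Submission
  imports Defs "HOL-Library.FuncSet" "HOL-Library.Multiset"
begin

lemma fin_le: "finite {\<beta>::'v::finite\<Rightarrow>nat. \<beta> \<le> E}"
proof -
  have "{\<beta>::'v\<Rightarrow>nat. \<beta> \<le> E} \<subseteq> Pi\<^sub>E UNIV (\<lambda>v. {..E v})"
    by (auto simp: le_fun_def PiE_def Pi_def)
  moreover have "finite (Pi\<^sub>E (UNIV::'v set) (\<lambda>v. {..E v}))" by (rule finite_PiE) auto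
  ultimately show ?thesis by (rule finite_subset)
qed

definition Tup :: "nat \<Rightarrow> ('v \<Rightarrow> nat) \<Rightarrow> (nat \<Rightarrow> 'v \<Rightarrow> nat) set" where
  "Tup k E = {\<gamma> \<in> Pi\<^sub>E {..<k} (\<lambda>_. {\<beta>. \<beta> \<le> E}). \<forall>v. (\<Sum>j<k. \<gamma> j v) = E v}"

lemma fin_Tup: "finite (Tup k (E::'v::finite\<Rightarrow>nat))"
  unfolding Tup_def by (rule finite_subset[OF _ finite_PiE[of "{..<k}" "\<lambda>_. {\<beta>. \<beta> \<le> E}"]])
     (auto simp: fin_le)

lemma comp_le_sum:
  fixes \<gamma> :: "nat \<Rightarrow> 'v \<Rightarrow> nat"
  assumes "j < k" "\<forall>v. (\<Sum>j<k. \<gamma> j v) = E v" shows "\<gamma> j \<le> E"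
  unfolding le_fun_def
proof
  fix v
  have "\<gamma> j v \<le> (\<Sum>j<k. \<gamma> j v)"
    using member_le_sum[of j "{..<k}" "\<lambda>j. \<gamma> j v"] assms(1) by simp
  then show "\<gamma> j v \<le> E v" using assms(2) by simp
qed

lemma Tup_Suc_iff:
  "case_nat \<beta> \<gamma> \<in> Tup (Suc k) E \<longleftrightarrow> \<beta> \<le> E \<and> \<gamma> \<in> Tup k (\<lambda>v. E v - \<beta> v)"
proof
  assume A: "case_nat \<beta> \<gamma> \<in> Tup (Suc k) E"
  hence s: "\<forall>v. \<beta> v + (\<Sum>j<k. \<gamma> j v) = E v" unfolding Tup_def by (simp add: sum.lessThan_Suc_shift del: sum.lessThan_Suc)
  hence b: "\<beta> \<le> E" by (auto simp: le_fun_def) (metis le_add1)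
  have s2: "\<forall>v. (\<Sum>j<k. \<gamma> j v) = E v - \<beta> v" using s by (metis add_diff_cancel_left')
  have "\<gamma> \<in> Pi\<^sub>E {..<k} (\<lambda>_. UNIV)"
    using A unfolding Tup_def PiE_def extensional_def by auto
  with s2 have "\<gamma> \<in> Tup k (\<lambda>v. E v - \<beta> v)"
    unfolding Tup_def using comp_le_sum[of _ k \<gamma>] by (auto simp: PiE_def)
  with b show "\<beta> \<le> E \<and> \<gamma> \<in> Tup k (\<lambda>v. E v - \<beta> v)" by simp
next
  assume A: "\<beta> \<le> E \<and> \<gamma> \<in> Tup k (\<lambda>v. E v - \<beta> v)"
  hence s: "\<forall>v. (\<Sum>j<k. \<gamma> j v) = E v - \<beta> v" "\<beta> \<le> E" unfolding Tup_def by auto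
  hence s2: "\<forall>v. (\<Sum>j<Suc k. case_nat \<beta> \<gamma> j v) = E v"
    by (auto simp: sum.lessThan_Suc_shift le_fun_def simp del: sum.lessThan_Suc)
  have "case_nat \<beta> \<gamma> \<in> Pi\<^sub>E {..<Suc k} (\<lambda>_. UNIV)"
    using A unfolding Tup_def PiE_def extensional_def by (auto split: nat.splits)
  with s2 show "case_nat \<beta> \<gamma> \<in> Tup (Suc k) E"
    unfolding Tup_def using comp_le_sum[of _ "Suc k" "case_nat \<beta> \<gamma>"] by (auto simp: PiE_def)
qed

lemma Tup_Suc_cons: "case_nat (\<delta> 0) (\<delta> \<circ> Suc) = \<delta>"
  by (auto simp: fun_eq_iff split: nat.splits)

lemma L2:
  fixes f :: "('v::finite, 'a::comm_ring_1) mps"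
  assumes IH: "\<And>E. mps_pow f k E = (\<Sum>\<gamma>\<in>Tup k E. \<Prod>j<k. f (\<gamma> j))"
  shows "(\<Sum>\<beta>\<in>{\<beta>. \<beta> \<le> E}. w \<beta> * (f \<beta> * mps_pow f k (\<lambda>v. E v - \<beta> v)))
       = (\<Sum>\<gamma>\<in>Tup (Suc k) E. w (\<gamma> 0) * (\<Prod>j<Suc k. f (\<gamma> j)))"
proof -
  have "(\<Sum>\<beta>\<in>{\<beta>. \<beta> \<le> E}. w \<beta> * (f \<beta> * mps_pow f k (\<lambda>v. E v - \<beta> v)))
     = (\<Sum>\<beta>\<in>{\<beta>. \<beta> \<le> E}. \<Sum>\<gamma>\<in>Tup k (\<lambda>v. E v - \<beta> v). w \<beta> * (f \<beta> * (\<Prod>j<k. f (\<gamma> j))))"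
    by (simp add: IH sum_distrib_left)
  also have "\<dots> = (\<Sum>p\<in>Sigma {\<beta>. \<beta> \<le> E} (\<lambda>\<beta>. Tup k (\<lambda>v. E v - \<beta> v)). w (fst p) * (f (fst p) * (\<Prod>j<k. f (snd p j))))"
    using sum.Sigma[of "{\<beta>. \<beta> \<le> E}" "\<lambda>\<beta>. Tup k (\<lambda>v. E v - \<beta> v)"
       "\<lambda>\<beta> \<gamma>. w \<beta> * (f \<beta> * (\<Prod>j<k. f (\<gamma> j)))"] by (simp add: fin_le fin_Tup split_beta)
  also have "\<dots> = (\<Sum>\<gamma>\<in>Tup (Suc k) E. w (\<gamma> 0) * (\<Prod>j<Suc k. f (\<gamma> j)))"
  proof (rule sum.reindex_bij_witness[where i="\<lambda>\<delta>. (\<delta> 0, \<delta> \<circ> Suc)" and j="\<lambda>p. case_nat (fst p) (snd p)"])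
    fix \<delta> assume "\<delta> \<in> Tup (Suc k) E"
    then have "case_nat (\<delta> 0) (\<delta> \<circ> Suc) \<in> Tup (Suc k) E" by (simp only: Tup_Suc_cons)
    then show "(\<delta> 0, \<delta> \<circ> Suc) \<in> Sigma {\<beta>. \<beta> \<le> E} (\<lambda>\<beta>. Tup k (\<lambda>v. E v - \<beta> v))"
      by (simp only: Tup_Suc_iff) simp
  qed (auto simp: Tup_Suc_iff Tup_Suc_cons prod.lessThan_Suc_shift simp del: prod.lessThan_Suc)
  finally show ?thesis .
qed

lemma pow_expand:
  fixes f :: "('v::finite, 'a::comm_ring_1) mps"
  shows "mps_pow f k E = (\<Sum>\<gamma>\<in>Tup k E. \<Prod>j<k. f (\<gamma> j))"
proof (induction k arbitrary: E)
  case 0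
  have "Tup 0 E = (if E = (\<lambda>_. 0) then {\<lambda>_. undefined} else {})"
    by (auto simp: Tup_def PiE_def extensional_def)
  then show ?case by (simp add: mps_one_def)
next
  case (Suc k)
  show ?case using L2[OF Suc.IH, of "\<lambda>_. 1" E] by (simp add: mps_mult_def)
qed

lemma V1:
  assumes "a \<le> N" "0 < m"
  shows "(\<Sum>l=0..m. l * (a choose l) * ((N - a) choose (m-l))) = a * ((N-1) choose (m-1))"
proof -
  obtain m' where m: "m = Suc m'" using assms(2) by (cases m) auto
  have "(\<Sum>l=0..m. l * (a choose l) * ((N - a) choose (m-l)))
      = (\<Sum>l\<le>m'. Suc l * (a choose Suc l) * ((N - a) choose (m'-l)))"
    unfolding m atLeast0AtMost sum.atMost_Suc_shift by simp
  also have "\<dots> = (\<Sum>l\<le>m'. a * ((a - 1) choose l) * ((N - a) choose (m'-l)))"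
    using times_binomial_minus1_eq[of "Suc _" a] by simp
  also have "\<dots> = a * (\<Sum>l\<le>m'. ((a - 1) choose l) * ((N - a) choose (m'-l)))"
    by (simp add: sum_distrib_left mult.assoc)
  also have "\<dots> = a * ((a - 1 + (N - a)) choose m')" by (simp add: vandermonde)
  also have "\<dots> = a * ((N-1) choose (m-1))"
    using assms(1) by (cases a) (auto simp: m)
  finally show ?thesis .
qed

lemma binsum:
  assumes "a \<le> N" "0 < m"
  shows "(\<Sum>l=0..m. (int l - 1) * int (a choose l) * int ((N - a) choose (m-l)))
     = int a * int ((N-1) choose (m-1)) - int (N choose m)"
proof -
  have V0: "(\<Sum>l=0..m. (a choose l) * ((N - a) choose (m-l))) = N choose m"
    using vandermonde[of a "N - a" m] assms(1) by (simp add: atLeast0AtMost)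
  have "(\<Sum>l=0..m. (int l - 1) * int (a choose l) * int ((N - a) choose (m-l)))
     = (\<Sum>l=0..m. int (l * (a choose l) * ((N - a) choose (m-l))) - int ((a choose l) * ((N - a) choose (m-l))))"
    by (rule sum.cong) (auto simp: algebra_simps)
  also have "\<dots> = int (\<Sum>l=0..m. l * (a choose l) * ((N - a) choose (m-l))) - int (\<Sum>l=0..m. (a choose l) * ((N - a) choose (m-l)))"
    by (simp only: sum_subtractf of_nat_sum)
  also have "\<dots> = int a * int ((N-1) choose (m-1)) - int (N choose m)"
    unfolding V0 V1[OF assms] by simp
  finally show ?thesis .
qed
definition tr :: "nat \<Rightarrow> nat \<Rightarrow> nat" where
  "tr j x = (if x = 0 then j else if x = j then 0 else x)"

lemma tr_tr[simp]: "tr j (tr j x) = x" by (simp add: tr_def)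

lemma inj_tr: "inj (tr j)" by (metis injI tr_tr)

lemma tr_image: "j < m \<Longrightarrow> 0 < m \<Longrightarrow> tr j ` {..<m} = {..<m}"
  by (auto simp: tr_def)

definition kappa :: "nat \<Rightarrow> (nat \<Rightarrow> 'b) \<Rightarrow> 'b multiset" where
  "kappa m \<gamma> = image_mset \<gamma> (mset_set {..<m})"

lemma kappa_tr: "j < m \<Longrightarrow> 0 < m \<Longrightarrow> kappa m (\<gamma> \<circ> tr j) = kappa m \<gamma>"
proof -
  assume a: "j < m" "0 < m"
  have "kappa m (\<gamma> \<circ> tr j) = image_mset \<gamma> (image_mset (tr j) (mset_set {..<m}))"
    by (simp add: kappa_def multiset.map_comp)
  also have "\<dots> = kappa m \<gamma>"
    using image_mset_mset_set[OF inj_on_subset[OF inj_tr[of j] subset_UNIV, of "{..<m}"]] tr_image[OF a]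
    by (simp add: kappa_def)
  finally show ?thesis .
qed

lemma Tup_tr:
  assumes j: "j < m" and m: "0 < m" and g: "\<gamma> \<in> Tup m E"
  shows "\<gamma> \<circ> tr j \<in> Tup m E"
proof -
  have s: "(\<Sum>x<m. \<gamma> (tr j x) v) = (\<Sum>x<m. \<gamma> x v)" for v
    using sum.reindex[OF inj_on_subset[OF inj_tr[of j] subset_UNIV, of "{..<m}"], of "\<lambda>x. \<gamma> x v"] tr_image[OF j m]
    by simp
  have "tr j x < m" if "x < m" for x using that j by (simp add: tr_def)
  moreover have "tr j x = x" if "\<not> x < m" for x using that j m by (simp add: tr_def)
  ultimately show ?thesis using g s unfolding Tup_def PiE_def extensional_def Pi_def
    by auto
qed

lemma swap_sum:
  assumes j: "j < m" and m: "0 < m"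
  shows "(\<Sum>\<gamma>\<in>{\<gamma>\<in>Tup m E. kappa m \<gamma> = M}. \<gamma> j i) = (\<Sum>\<gamma>\<in>{\<gamma>\<in>Tup m E. kappa m \<gamma> = M}. \<gamma> 0 (i::'v))"
proof (rule sum.reindex_bij_witness[where i="\<lambda>\<gamma>. \<gamma> \<circ> tr j" and j="\<lambda>\<gamma>. \<gamma> \<circ> tr j"])
  fix a assume "a \<in> {\<gamma>\<in>Tup m E. kappa m \<gamma> = M}"
  then show "a \<circ> tr j \<in> {\<gamma>\<in>Tup m E. kappa m \<gamma> = M}"
    using Tup_tr[OF j m] kappa_tr[OF j m] by auto
next
  fix a show "(a \<circ> tr j) 0 i = a j i" by (simp add: tr_def)
qed (auto simp: fun_eq_iff Tup_tr[OF j m] kappa_tr[OF j m])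

lemma class_sum:
  assumes m: "0 < m"
  shows "m * (\<Sum>\<gamma>\<in>{\<gamma>\<in>Tup m E. kappa m \<gamma> = M}. \<gamma> 0 (i::'v)) = E i * card {\<gamma>\<in>Tup m E. kappa m \<gamma> = M}"
proof -
  let ?S = "{\<gamma>\<in>Tup m E. kappa m \<gamma> = M}"
  have "(\<Sum>j<m. \<Sum>\<gamma>\<in>?S. \<gamma> j i) = (\<Sum>j<m. \<Sum>\<gamma>\<in>?S. \<gamma> 0 i)"
    by (rule sum.cong[OF refl], rule swap_sum[OF _ m]) simp
  then have "m * (\<Sum>\<gamma>\<in>?S. \<gamma> 0 i) = (\<Sum>j<m. \<Sum>\<gamma>\<in>?S. \<gamma> j i)" by simp
  also have "\<dots> = (\<Sum>\<gamma>\<in>?S. \<Sum>j<m. \<gamma> j i)" by (rule sum.swap)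
  also have "\<dots> = (\<Sum>\<gamma>\<in>?S. E i)" by (rule sum.cong) (auto simp: Tup_def)
  finally show ?thesis by (simp add: mult.commute)
qed

lemma group_eq:
  fixes P :: "'x \<Rightarrow> 'a::comm_ring_1"
  assumes fin: "finite T" and PQ: "\<And>\<gamma>. \<gamma> \<in> T \<Longrightarrow> P \<gamma> = Q (kk \<gamma>)"
    and ab: "\<And>M. (\<Sum>\<gamma>\<in>{\<gamma>\<in>T. kk \<gamma> = M}. a \<gamma>) = (\<Sum>\<gamma>\<in>{\<gamma>\<in>T. kk \<gamma> = M}. b \<gamma>)"
  shows "(\<Sum>\<gamma>\<in>T. of_nat (a \<gamma>) * P \<gamma>) = (\<Sum>\<gamma>\<in>T. of_nat (b \<gamma>) * P \<gamma>)"
proof -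
  have key: "(\<Sum>\<gamma>\<in>T. of_nat (c \<gamma>) * P \<gamma>) = (\<Sum>M\<in>kk ` T. of_nat (\<Sum>\<gamma>\<in>{\<gamma>\<in>T. kk \<gamma> = M}. c \<gamma>) * Q M)" for c
  proof -
    have "(\<Sum>\<gamma>\<in>T. of_nat (c \<gamma>) * P \<gamma>) = (\<Sum>M\<in>kk ` T. \<Sum>\<gamma>\<in>{\<gamma>\<in>T. kk \<gamma> = M}. of_nat (c \<gamma>) * P \<gamma>)"
      by (rule sum.group[symmetric]) (auto simp: fin)
    also have "\<dots> = (\<Sum>M\<in>kk ` T. \<Sum>\<gamma>\<in>{\<gamma>\<in>T. kk \<gamma> = M}. of_nat (c \<gamma>) * Q M)"
      by (rule sum.cong[OF refl], rule sum.cong) (auto simp: PQ)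
    also have "\<dots> = (\<Sum>M\<in>kk ` T. of_nat (\<Sum>\<gamma>\<in>{\<gamma>\<in>T. kk \<gamma> = M}. c \<gamma>) * Q M)"
      by (simp add: sum_distrib_right)
    finally show ?thesis .
  qed
  show ?thesis unfolding key ab ..
qed
lemma step_A:
  fixes f g :: "('v::finite,'a::comm_ring_1) mps"
  assumes lm: "l \<le> m"
  shows "mps_mult (hasse l i f) (hasse (m-l) i g) \<alpha> =
    (\<Sum>\<gamma>\<in>{\<gamma>. \<gamma> \<le> \<alpha>(i := \<alpha> i + m)}. of_nat (\<gamma> i choose l) * of_nat ((\<alpha> i + m - \<gamma> i) choose (m-l))
        * (f \<gamma> * g (\<lambda>v. (\<alpha>(i := \<alpha> i + m)) v - \<gamma> v)))"
proof -
  let ?E = "\<alpha>(i := \<alpha> i + m)"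
  let ?T0 = "{\<gamma>. \<gamma> \<le> ?E \<and> l \<le> \<gamma> i \<and> \<gamma> i \<le> \<alpha> i + l}"
  let ?h = "\<lambda>\<gamma>. of_nat (\<gamma> i choose l) * of_nat ((\<alpha> i + m - \<gamma> i) choose (m-l)) * (f \<gamma> * g (\<lambda>v. ?E v - \<gamma> v)) :: 'a"
  have "mps_mult (hasse l i f) (hasse (m-l) i g) \<alpha> = sum ?h ?T0"
    unfolding mps_mult_def hasse_def
  proof (rule sum.reindex_bij_witness[where i="\<lambda>\<gamma>. \<gamma>(i := \<gamma> i - l)" and j="\<lambda>\<beta>. \<beta>(i := \<beta> i + l)"])
    fix \<beta> assume b: "\<beta> \<in> {\<beta>. \<beta> \<le> \<alpha>}"
    hence bi: "\<beta> i \<le> \<alpha> i" by (simp add: le_fun_def)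
    have e1: "(\<lambda>v. \<alpha> v - \<beta> v)(i := \<alpha> i - \<beta> i + (m - l)) = (\<lambda>v. ?E v - (\<beta>(i := \<beta> i + l)) v)"
      using bi lm by (auto simp: fun_eq_iff)
    have e2: "\<alpha> i - \<beta> i + (m - l) = \<alpha> i + m - (\<beta> i + l)" using bi lm by simp
    show "?h (\<beta>(i := \<beta> i + l)) = of_nat ((\<beta> i + l) choose l) * f (\<beta>(i := \<beta> i + l)) *
       (of_nat (((\<lambda>v. \<alpha> v - \<beta> v) i + (m - l)) choose (m - l)) *
        g ((\<lambda>v. \<alpha> v - \<beta> v)(i := (\<lambda>v. \<alpha> v - \<beta> v) i + (m - l))))"
      unfolding e1 unfolding e2 by (simp add: mult_ac)
  qed (auto simp: le_fun_def lm add.commute intro: add_le_mono, metis)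
  also have "\<dots> = sum ?h {\<gamma>. \<gamma> \<le> ?E}"
  proof (rule sum.mono_neutral_left)
    show "\<forall>x\<in>{\<gamma>. \<gamma> \<le> ?E} - ?T0. ?h x = 0"
    proof
      fix \<gamma> assume "\<gamma> \<in> {\<gamma>. \<gamma> \<le> ?E} - ?T0"
      moreover have "\<gamma> i \<le> \<alpha> i + m" using calculation by (auto simp: le_fun_def dest: spec[of _ i])
      ultimately have "\<gamma> i < l \<or> \<alpha> i + m - \<gamma> i < m - l" by auto
      thus "?h \<gamma> = 0" by (auto simp: binomial_eq_0)
    qed
  qed (auto simp: fin_le)
  finally show ?thesis .
qed
lemma step_C:
  fixes f :: "('v::finite,'a::comm_ring_1) mps" and i :: 'v and \<alpha> :: "'v \<Rightarrow> nat"
  assumes m: "0 < m"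
  defines "E \<equiv> \<alpha>(i := \<alpha> i + m)"
  shows "hasse_sum i m f \<alpha> =
     of_nat ((E i - 1) choose (m - 1)) * (\<Sum>\<gamma>\<in>{\<gamma>. \<gamma> \<le> E}. of_nat (\<gamma> i) * (f \<gamma> * mps_pow f (m-1) (\<lambda>v. E v - \<gamma> v)))
     - of_nat (E i choose m) * mps_pow f m E"
proof -
  let ?g = "mps_pow f (m-1)"
  let ?P = "\<lambda>\<gamma>. f \<gamma> * ?g (\<lambda>v. E v - \<gamma> v)"
  have "hasse_sum i m f \<alpha> = (\<Sum>l=0..m. of_int (int l - 1) * (\<Sum>\<gamma>\<in>{\<gamma>. \<gamma> \<le> E}.
      of_nat (\<gamma> i choose l) * of_nat ((E i - \<gamma> i) choose (m-l)) * ?P \<gamma>))"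
    unfolding hasse_sum_def using step_A[of _ m i f ?g \<alpha>] by (simp add: E_def)
  also have "\<dots> = (\<Sum>\<gamma>\<in>{\<gamma>. \<gamma> \<le> E}. (\<Sum>l=0..m. of_int (int l - 1) *
      (of_nat (\<gamma> i choose l) * of_nat ((E i - \<gamma> i) choose (m-l)))) * ?P \<gamma>)"
    by (simp add: sum_distrib_left sum_distrib_right mult_ac sum.swap[of _ "{0..m}"])
  also have "\<dots> = (\<Sum>\<gamma>\<in>{\<gamma>. \<gamma> \<le> E}. (of_nat ((E i - 1) choose (m - 1)) * of_nat (\<gamma> i) - of_nat (E i choose m)) * ?P \<gamma>)"
  proof (rule sum.cong[OF refl])
    fix \<gamma> assume "\<gamma> \<in> {\<gamma>. \<gamma> \<le> E}"
    hence le: "\<gamma> i \<le> E i" by (simp add: le_fun_def)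
    have "(\<Sum>l=0..m. of_int (int l - 1) * (of_nat (\<gamma> i choose l) * of_nat ((E i - \<gamma> i) choose (m-l))) :: 'a)
       = of_int (\<Sum>l=0..m. (int l - 1) * int (\<gamma> i choose l) * int ((E i - \<gamma> i) choose (m-l)))"
      by (simp add: mult.assoc)
    also have "\<dots> = of_nat ((E i - 1) choose (m - 1)) * of_nat (\<gamma> i) - of_nat (E i choose m)"
      unfolding binsum[OF le m] by (simp add: mult.commute)
    finally show "(\<Sum>l=0..m. of_int (int l - 1) * (of_nat (\<gamma> i choose l) * of_nat ((E i - \<gamma> i) choose (m-l)))) * ?P \<gamma>
       = (of_nat ((E i - 1) choose (m - 1)) * of_nat (\<gamma> i) - of_nat (E i choose m)) * ?P \<gamma>" by simp
  qed
  also have "\<dots> = of_nat ((E i - 1) choose (m - 1)) * (\<Sum>\<gamma>\<in>{\<gamma>. \<gamma> \<le> E}. of_nat (\<gamma> i) * ?P \<gamma>)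
     - of_nat (E i choose m) * (\<Sum>\<gamma>\<in>{\<gamma>. \<gamma> \<le> E}. ?P \<gamma>)"
    by (simp add: algebra_simps sum_subtractf sum_distrib_left)
  also have "(\<Sum>\<gamma>\<in>{\<gamma>. \<gamma> \<le> E}. ?P \<gamma>) = mps_pow f m E"
    using m by (cases m) (auto simp: mps_mult_def)
  finally show ?thesis .
qed
lemma main_gen:
  fixes f :: "('v::finite,'a::comm_ring_1) mps" and i :: 'v
  assumes m: "0 < m"
  shows "hasse_sum i m f = (\<lambda>_. 0)"
proof
  fix \<alpha> :: "'v \<Rightarrow> nat"
  define E where "E = \<alpha>(i := \<alpha> i + m)"
  define C1 where "C1 = (E i - 1) choose (m - 1)"
  define C0 where "C0 = E i choose m"
  let ?T = "Tup m E"
  let ?P = "\<lambda>\<gamma>. \<Prod>j<m. f (\<gamma> j)"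
  have mm: "Suc (m - 1) = m" using m by simp
  have X: "(\<Sum>\<gamma>\<in>{\<gamma>. \<gamma> \<le> E}. of_nat (\<gamma> i) * (f \<gamma> * mps_pow f (m-1) (\<lambda>v. E v - \<gamma> v)))
     = (\<Sum>\<gamma>\<in>?T. of_nat (\<gamma> 0 i) * ?P \<gamma>)"
    using L2[where f=f and k="m - 1" and w="\<lambda>\<beta>. of_nat (\<beta> i)" and E=E, OF pow_expand] unfolding mm .
  have hs: "hasse_sum i m f \<alpha> = of_nat C1 * (\<Sum>\<gamma>\<in>?T. of_nat (\<gamma> 0 i) * ?P \<gamma>) - of_nat C0 * (\<Sum>\<gamma>\<in>?T. ?P \<gamma>)"
  proof -
    have "hasse_sum i m f \<alpha> = of_nat C1 * (\<Sum>\<gamma>\<in>{\<gamma>. \<gamma> \<le> E}. of_nat (\<gamma> i) * (f \<gamma> * mps_pow f (m-1) (\<lambda>v. E v - \<gamma> v)))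
       - of_nat C0 * mps_pow f m E"
      using step_C[OF m, where i=i and \<alpha>=\<alpha> and f=f] unfolding E_def C1_def C0_def .
    then show ?thesis unfolding X pow_expand[of f m E] .
  qed
  have "(\<Sum>\<gamma>\<in>?T. of_nat (C1 * \<gamma> 0 i) * ?P \<gamma>) = (\<Sum>\<gamma>\<in>?T. of_nat C0 * ?P \<gamma>)"
  proof (rule group_eq[where kk="kappa m" and Q="\<lambda>M. prod_mset (image_mset f M)"])
    show "finite ?T" by (rule fin_Tup)
  next
    fix \<gamma> show "?P \<gamma> = prod_mset (image_mset f (kappa m \<gamma>))"
      by (simp add: kappa_def prod_unfold_prod_mset multiset.map_comp comp_def)
  next
    fix M
    let ?S = "{\<gamma>\<in>?T. kappa m \<gamma> = M}"
    have cs: "m * (\<Sum>\<gamma>\<in>?S. \<gamma> 0 i) = E i * card ?S" by (rule class_sum[OF m])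
    have bc: "m * C0 = E i * C1" unfolding C0_def C1_def by (rule times_binomial_minus1_eq[OF m])
    have "m * (C1 * (\<Sum>\<gamma>\<in>?S. \<gamma> 0 i)) = m * (C0 * card ?S)"
    proof -
      have "m * (C1 * (\<Sum>\<gamma>\<in>?S. \<gamma> 0 i)) = C1 * (m * (\<Sum>\<gamma>\<in>?S. \<gamma> 0 i))" by (simp only: mult.left_commute)
      also have "\<dots> = (E i * C1) * card ?S" by (simp only: cs mult.assoc mult.commute mult.left_commute)
      also have "\<dots> = m * (C0 * card ?S)" by (simp only: bc[symmetric] mult.assoc)
      finally show ?thesis .
    qed
    hence "C1 * (\<Sum>\<gamma>\<in>?S. \<gamma> 0 i) = C0 * card ?S" using m by simp
    thus "(\<Sum>\<gamma>\<in>?S. C1 * \<gamma> 0 i) = (\<Sum>\<gamma>\<in>?S. C0)"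
      by (simp add: sum_distrib_left mult.commute)
  qed
  hence "of_nat C1 * (\<Sum>\<gamma>\<in>?T. of_nat (\<gamma> 0 i) * ?P \<gamma>) = of_nat C0 * (\<Sum>\<gamma>\<in>?T. ?P \<gamma>)"
    by (simp add: sum_distrib_left mult.assoc)
  thus "hasse_sum i m f \<alpha> = 0" unfolding hs by simp
qed

theorem mainTheorem3:
  fixes i :: "'v::finite" and m :: nat
  assumes "m > 0"
  shows "(\<forall>f :: ('v, int) mps. is_poly f \<longrightarrow> hasse_sum i m f = (\<lambda>_. 0))
       \<and> (\<forall>f :: ('v, int) mps. hasse_sum i m f = (\<lambda>_. 0))
       \<and> (CHAR('k::field) > 0 \<longrightarrow>
            (\<forall>f :: ('v, 'k) mps. is_poly f \<longrightarrow> hasse_sum i m f = (\<lambda>_. 0))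
          \<and> (\<forall>f :: ('v, 'k) mps. hasse_sum i m f = (\<lambda>_. 0)))"
  by (simp add: main_gen[OF assms])

end
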